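(* Let $n$ be a positive integer and let $G$ be a bipartite graph having two vertices $x$ and $y$ in the same partite set such that $N(x)$ is a proper subset of $N(y)$. If $G[\overline{K_n}]$ admits a local distance antimagic labeling, then $\chi_{ld}(G[\overline{K_{n}}])\geq 3$.
   Context: All graphs are finite, simple and undirected. $N(v)$ denotes the open neighborhood of $v$. For a graph $G=(V,E)$ of order $N$ without isolated vertices, a bijection $f\colon V\to\{1,2,\dots,N\}$ is a local distance antimagic labeling if $w(u)\neq w(v)$ for every edge $uv$, where $w(u)=\sum_{x\in N(u)}f(x)$. $\chi_{ld}(G)$ is the minimum number of distinct weights over all local distance antimagic labelings of $G$. $\overline{K_n}$ is the edgeless graph on $n$ vertices. The lexicographic product $G[H]$ has vertex set $V(G)\times V(H)$, with $(g,h)$ adjacent to $(g',h')$ iff $gg'\in E(G)$, or $g=g'$ and $hh'\in E(H)$. *)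

theory Defs
  imports Main
begin

definition simple_graph :: "'a set \<Rightarrow> ('a \<Rightarrow> 'a \<Rightarrow> bool) \<Rightarrow> bool" where
  "simple_graph V E \<longleftrightarrow> finite V \<and> (\<forall>u v. E u v \<longrightarrow> u \<in> V \<and> v \<in> V)
     \<and> (\<forall>u v. E u v \<longrightarrow> E v u) \<and> (\<forall>v. \<not> E v v)"

definition nbhd :: "'a set \<Rightarrow> ('a \<Rightarrow> 'a \<Rightarrow> bool) \<Rightarrow> 'a \<Rightarrow> 'a set" where
  "nbhd V E v = {u \<in> V. E v u}"

definition bipartite_with :: "'a set \<Rightarrow> ('a \<Rightarrow> 'a \<Rightarrow> bool) \<Rightarrow> 'a set \<Rightarrow> 'a set \<Rightarrow> bool" where
  "bipartite_with V E A B \<longleftrightarrow> A \<union> B = V \<and> A \<inter> B = {}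
     \<and> (\<forall>u v. E u v \<longrightarrow> (u \<in> A \<and> v \<in> B) \<or> (u \<in> B \<and> v \<in> A))"

definition lex_verts :: "'a set \<Rightarrow> 'b set \<Rightarrow> ('a \<times> 'b) set" where
  "lex_verts VG VH = VG \<times> VH"

definition lex_edge :: "('a \<Rightarrow> 'a \<Rightarrow> bool) \<Rightarrow> ('b \<Rightarrow> 'b \<Rightarrow> bool)
    \<Rightarrow> ('a \<times> 'b) \<Rightarrow> ('a \<times> 'b) \<Rightarrow> bool" where
  "lex_edge EG EH p q \<longleftrightarrow> EG (fst p) (fst q) \<or> (fst p = fst q \<and> EH (snd p) (snd q))"

definition edgeless_verts :: "nat \<Rightarrow> nat set" where
  "edgeless_verts n = {1..n}"

definition edgeless_edge :: "nat \<Rightarrow> nat \<Rightarrow> bool" where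
  "edgeless_edge u v \<longleftrightarrow> False"

definition ld_weight :: "'a set \<Rightarrow> ('a \<Rightarrow> 'a \<Rightarrow> bool) \<Rightarrow> ('a \<Rightarrow> nat) \<Rightarrow> 'a \<Rightarrow> nat" where
  "ld_weight V E f u = (\<Sum>x\<in>nbhd V E u. f x)"

definition ld_labeling :: "'a set \<Rightarrow> ('a \<Rightarrow> 'a \<Rightarrow> bool) \<Rightarrow> ('a \<Rightarrow> nat) \<Rightarrow> bool" where
  "ld_labeling V E f \<longleftrightarrow> (\<forall>v\<in>V. nbhd V E v \<noteq> {})
     \<and> bij_betw f V {1..card V}
     \<and> (\<forall>u\<in>V. \<forall>v\<in>V. E u v \<longrightarrow> ld_weight V E f u \<noteq> ld_weight V E f v)"

definition chi_ld :: "'a set \<Rightarrow> ('a \<Rightarrow> 'a \<Rightarrow> bool) \<Rightarrow> nat" where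
  "chi_ld V E = (LEAST k. \<exists>f. ld_labeling V E f \<and> card (ld_weight V E f ` V) = k)"

end

theory Submission
  imports Defs
begin

theorem mainTheorem8:
  fixes V :: "'a set" and E :: "'a \<Rightarrow> 'a \<Rightarrow> bool" and A B :: "'a set"
    and x y :: 'a and n :: nat
  assumes "n \<ge> 1"
    and "simple_graph V E"
    and "bipartite_with V E A B"
    and "x \<in> A" and "y \<in> A"
    and "nbhd V E x \<subset> nbhd V E y"
    and "\<exists>f. ld_labeling (lex_verts V (edgeless_verts n)) (lex_edge E edgeless_edge) f"
  shows "chi_ld (lex_verts V (edgeless_verts n)) (lex_edge E edgeless_edge) \<ge> 3"
proof -
  let ?P = "lex_verts V (edgeless_verts n)"
  let ?E = "lex_edge E edgeless_edge"
  let ?N = "{1..n}"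
  have finV: "finite V" using assms(2) unfolding simple_graph_def by blast
  have EV: "\<And>u v. E u v \<Longrightarrow> u \<in> V \<and> v \<in> V" using assms(2) unfolding simple_graph_def by blast
  have Esym: "\<And>u v. E u v \<Longrightarrow> E v u" using assms(2) unfolding simple_graph_def by blast
  have nb: "\<And>g i. nbhd ?P ?E (g,i) = nbhd V E g \<times> ?N"
    unfolding nbhd_def lex_verts_def lex_edge_def edgeless_edge_def edgeless_verts_def by auto
  have "\<exists>k f. ld_labeling ?P ?E f \<and> card (ld_weight ?P ?E f ` ?P) = k" using assms(7) by blast
  then have "\<exists>f. ld_labeling ?P ?E f \<and> card (ld_weight ?P ?E f ` ?P) = chi_ld ?P ?E"
    unfolding chi_ld_def by (rule LeastI_ex)
  then obtain f where lab: "ld_labeling ?P ?E f"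
    and cardeq: "card (ld_weight ?P ?E f ` ?P) = chi_ld ?P ?E" by blast
  have finP: "finite ?P" using finV unfolding lex_verts_def edgeless_verts_def by simp
  have bij: "bij_betw f ?P {1..card ?P}" using lab unfolding ld_labeling_def by blast
  have fpos: "\<And>p. p \<in> ?P \<Longrightarrow> f p \<ge> 1" using bij by (auto dest: bij_betw_apply)
  have wt: "\<And>g i. ld_weight ?P ?E f (g,i) = (\<Sum>p\<in>nbhd V E g \<times> ?N. f p)"
    unfolding ld_weight_def nb by simp
  have xV: "x \<in> V" and yV: "y \<in> V" using assms(3,4,5) unfolding bipartite_with_def by auto
  have n1: "1 \<in> ?N" using assms(1) by simp
  have x1: "(x,1) \<in> ?P" and y1: "(y,1) \<in> ?P" using xV yV n1 unfolding lex_verts_def edgeless_verts_def by auto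
  have "nbhd ?P ?E (x,1) \<noteq> {}" using lab x1 unfolding ld_labeling_def by blast
  then obtain u where ux: "u \<in> nbhd V E x" unfolding nb by auto
  then have uy: "u \<in> nbhd V E y" using assms(6) by blast
  have Exu: "E x u" and Eyu: "E y u" and uV: "u \<in> V" using ux uy unfolding nbhd_def by auto
  have u1: "(u,1) \<in> ?P" using uV n1 unfolding lex_verts_def edgeless_verts_def by auto
  have w1: "ld_weight ?P ?E f (x,1) \<noteq> ld_weight ?P ?E f (u,1)"
    using lab x1 u1 Exu unfolding ld_labeling_def lex_edge_def by auto
  have w2: "ld_weight ?P ?E f (y,1) \<noteq> ld_weight ?P ?E f (u,1)"
    using lab y1 u1 Eyu unfolding ld_labeling_def lex_edge_def by auto
  obtain z where z: "z \<in> nbhd V E y" "z \<notin> nbhd V E x" using assms(6) by blast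
  have finy: "finite (nbhd V E y \<times> ?N)" using finV unfolding nbhd_def by simp
  have sub: "nbhd V E y \<times> ?N \<subseteq> ?P" unfolding nbhd_def lex_verts_def edgeless_verts_def by auto
  have "(\<Sum>p\<in>nbhd V E x \<times> ?N. f p) < (\<Sum>p\<in>nbhd V E y \<times> ?N. f p)"
  proof (rule sum_strict_mono2[OF finy])
    show "nbhd V E x \<times> ?N \<subseteq> nbhd V E y \<times> ?N" using assms(6) by blast
    show "(z,1) \<in> nbhd V E y \<times> ?N - nbhd V E x \<times> ?N" using z n1 by blast
    show "0 < f (z,1)" using fpos sub z n1 by force
  qed simp
  then have w3: "ld_weight ?P ?E f (x,1) \<noteq> ld_weight ?P ?E f (y,1)" unfolding wt by simp
  have "{ld_weight ?P ?E f (x,1), ld_weight ?P ?E f (y,1), ld_weight ?P ?E f (u,1)}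
        \<subseteq> ld_weight ?P ?E f ` ?P" using x1 y1 u1 by blast
  then have "card {ld_weight ?P ?E f (x,1), ld_weight ?P ?E f (y,1), ld_weight ?P ?E f (u,1)}
        \<le> card (ld_weight ?P ?E f ` ?P)" using finP by (intro card_mono) auto
  moreover have "card {ld_weight ?P ?E f (x,1), ld_weight ?P ?E f (y,1), ld_weight ?P ?E f (u,1)} = 3"
    using w1 w2 w3 by simp
  ultimately show ?thesis using cardeq by simp
qed

end
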